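(* If $X$ is an (infinite) $T_1$-space, then $\psi(X)\le nu_s(X)\cdot 2^{s(X)}$.
   Context: For a space $X$ and $A\subseteq X$, the $\theta$-closure of $A$ is $\mathrm{cl}_\theta(A):=\{y\in X:\ \overline{B}\cap A\neq\emptyset$ for every open neighborhood $B$ of $y\}$. The non-Urysohn number of $X$ with respect to singletons is $nu_s(X):=1+\sup\{|\mathrm{cl}_\theta(\{x\})|:x\in X\}$. $s(X)$ denotes the spread of $X$ (supremum of cardinalities of discrete subspaces, plus $\omega$) and $\psi(X)$ the pseudocharacter of $X$ (the supremum over $x\in X$ of the minimal cardinality of a family of open sets whose intersection is $\{x\}$). Throughout, "space" means infinite topological space. *)

theory Defs
  imports "HOL-Analysis.Analysis"
begin

unbundle cardinal_syntax

definition theta_closure :: "'a topology \<Rightarrow> 'a set \<Rightarrow> 'a set" where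
  "theta_closure X A = {y \<in> topspace X. \<forall>B. openin X B \<and> y \<in> B \<longrightarrow> (X closure_of B) \<inter> A \<noteq> {}}"

definition is_card_sup :: "'a set set \<Rightarrow> 'a set \<Rightarrow> bool" where
  "is_card_sup F S \<longleftrightarrow> (\<forall>A\<in>F. (card_of A) \<le>o (card_of S)) \<and> (\<forall>T::'a set. (\<forall>A\<in>F. (card_of A) \<le>o (card_of T)) \<longrightarrow> (card_of S) \<le>o (card_of T))"

definition discrete_subspace :: "'a topology \<Rightarrow> 'a set \<Rightarrow> bool" where
  "discrete_subspace X D \<longleftrightarrow> D \<subseteq> topspace X \<and> subtopology X D = discrete_topology D"

definition spread :: "'a topology \<Rightarrow> ('a + nat) rel" where
  "spread X = card_of (SOME S. is_card_sup {D. discrete_subspace X D} S) +c natLeq"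

definition nu_s :: "'a topology \<Rightarrow> (unit + 'a) rel" where
  "nu_s X = cone +c card_of (SOME N. is_card_sup {theta_closure X {x} | x. x \<in> topspace X} N)"

end

theory Submission
  imports Defs
begin

lemma sup_ex: "\<exists>S. is_card_sup F S"
proof -
  let ?Q = "{|T| | T::'a set. \<forall>A\<in>F. |A| \<le>o |T|}"
  have "\<forall>A\<in>F. |A| \<le>o |UNIV::'a set|" by (intro ballI card_of_mono1 subset_UNIV)
  then have u: "|UNIV::'a set| \<in> ?Q" unfolding mem_Collect_eq by (intro exI[of _ UNIV] conjI refl)
  then have ne: "?Q \<noteq> {}" by (metis empty_iff)
  have wo: "\<forall>r\<in>?Q. Well_order r" using card_of_Well_order by blast
  obtain m where m: "m \<in> ?Q" and mn: "\<forall>r'\<in>?Q. m \<le>o r'"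
    using exists_minim_Well_order[OF ne wo] by (rule bexE)
  obtain S where S: "m = |S|" "\<forall>A\<in>F. |A| \<le>o |S|" using m by blast
  have "is_card_sup F S"
    unfolding is_card_sup_def
  proof (intro conjI allI impI)
    show "\<forall>A\<in>F. |A| \<le>o |S|" by (rule S(2))
    fix T :: "'a set" assume "\<forall>A\<in>F. |A| \<le>o |T|"
    then have "|T| \<in> ?Q" unfolding mem_Collect_eq by (intro exI[of _ T] conjI refl)
    then have "m \<le>o |T|" using mn by (rule_tac bspec)
    then show "|S| \<le>o |T|" using S(1) by simp
  qed
  then show ?thesis by (rule exI)
qed

lemma shapiro:
  fixes X :: "'a topology" and U :: "'a \<Rightarrow> 'a set"
  assumes Y: "Y \<subseteq> topspace X" and UY: "\<forall>p\<in>Y. openin X (U p) \<and> p \<in> U p"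
  shows "\<exists>A\<subseteq>Y. discrete_subspace X A \<and> Y \<subseteq> X closure_of A \<union> \<Union>(U ` A)"
proof -
  obtain r :: "'a rel" where r0: "Well_order r \<and> Field r = UNIV" using well_ordering by (rule exE)
  have r: "Well_order r" "Field r = UNIV" using r0 by auto
  define R where "R = r - Id"
  have wfR: "wf R" unfolding R_def using r(1) unfolding well_order_on_def by (rule conjunct2)
  have tot0: "total_on UNIV r" using r(1) r(2) unfolding well_order_on_def linear_order_on_def by simp
  have tot: "\<And>p q. p \<noteq> q \<Longrightarrow> (p, q) \<in> R \<or> (q, p) \<in> R"
    using tot0 unfolding R_def total_on_def by blast
  define F where "F = (\<lambda>h p. p \<in> Y \<and> p \<notin> X closure_of {q. (q,p)\<in>R \<and> h q} \<union> \<Union>(U ` {q. (q,p)\<in>R \<and> h q}))"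
  define g where "g = wfrec R F"
  define A where "A = {p. g p}"
  define Ap where "Ap = (\<lambda>p. {q\<in>A. (q,p)\<in>R})"
  have key: "g p \<longleftrightarrow> p \<in> Y \<and> p \<notin> X closure_of (Ap p) \<union> \<Union>(U ` Ap p)" for p
  proof -
    have "g p = F (cut g R p) p" unfolding g_def by (rule wfrec[OF wfR])
    moreover have "{q. (q,p)\<in>R \<and> cut g R p q} = Ap p" unfolding Ap_def A_def by (auto simp: cut_apply)
    ultimately show ?thesis unfolding F_def by simp
  qed
  have AY: "A \<subseteq> Y" using key A_def by blast
  have disc: "discrete_subspace X A"
    unfolding discrete_subspace_def
  proof
    show "A \<subseteq> topspace X" using AY Y by blast
    show "subtopology X A = discrete_topology A"
    proof (rule sym, subst discrete_topology_unique, intro conjI ballI)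
      show "topspace (subtopology X A) = A" using AY Y by auto
      fix p assume pA: "p \<in> A"
      define W where "W = U p \<inter> (topspace X - X closure_of (Ap p))"
      have "openin X (U p)" using UY pA AY by blast
      then have oW: "openin X W" unfolding W_def
        by (intro openin_Int openin_diff[OF openin_topspace closedin_closure_of])
      have "{p} = W \<inter> A"
      proof
        have gp: "g p" using pA unfolding A_def by simp
        have "p \<in> Y" using pA AY by blast
        then have "p \<in> U p" "p \<in> topspace X" using UY Y by auto
        moreover have "p \<notin> X closure_of (Ap p)" using key[of p] gp by blast
        ultimately show "{p} \<subseteq> W \<inter> A" using pA unfolding W_def by blast
        show "W \<inter> A \<subseteq> {p}"
        proof
          fix q assume q: "q \<in> W \<inter> A"
          show "q \<in> {p}"
          proof (rule ccontr)
            assume "q \<notin> {p}"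
            then have "(q,p) \<in> R \<or> (p,q) \<in> R" using tot by auto
            then show False
            proof
              assume "(q,p) \<in> R"
              then have "q \<in> Ap p" using q Ap_def by auto
              moreover have "Ap p \<subseteq> X closure_of Ap p"
                by (rule closure_of_subset) (use AY Y Ap_def in auto)
              ultimately show False using q W_def by auto
            next
              assume "(p,q) \<in> R"
              then have "p \<in> Ap q" using pA Ap_def by auto
              then have "q \<in> \<Union>(U ` Ap q)" using q W_def by auto
              moreover have "g q" using q unfolding A_def by simp
              ultimately show False using key[of q] by blast
            qed
          qed
        qed
      qed
      then show "openin (subtopology X A) {p}" using oW openin_subtopology by blast
    qed
  qed
  have cov: "Y \<subseteq> X closure_of A \<union> \<Union>(U ` A)"
  proof
    fix p assume pY: "p \<in> Y"
    show "p \<in> X closure_of A \<union> \<Union>(U ` A)"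
    proof (cases "g p")
      case True then show ?thesis using UY pY A_def by auto
    next
      case False
      then have "p \<in> X closure_of (Ap p) \<union> \<Union>(U ` Ap p)" using key pY by auto
      moreover have "X closure_of (Ap p) \<subseteq> X closure_of A" by (rule closure_of_mono) (auto simp: Ap_def)
      moreover have "\<Union>(U ` Ap p) \<subseteq> \<Union>(U ` A)" by (auto simp: Ap_def)
      ultimately show ?thesis by blast
    qed
  qed
  show ?thesis using AY disc cov by blast
qed


lemma fin_le_K:
  assumes "finite M" "Cinfinite K"
  shows "|M| \<le>o K"
proof -
  have "|M| <o K" using assms
    by (intro finite_ordLess_infinite[OF card_of_Well_order])
       (auto simp: Field_card_of cinfinite_def intro: card_order_on_well_order_on)
  then show ?thesis by (rule ordLess_imp_ordLeq)
qed

theorem lemma3p9: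
  fixes X :: "'a topology"
  assumes "infinite (topspace X)" and "t1_space X"
  shows "\<forall>x\<in>topspace X. \<exists>\<U>. (\<forall>U\<in>\<U>. openin X U) \<and> \<Inter>\<U> = {x}
           \<and> (card_of \<U>) \<le>o nu_s X *c (ctwo ^c spread X)"
proof
  fix x assume x: "x \<in> topspace X"
  define C where "C = theta_closure X {x}"
  define Y where "Y = topspace X - C"
  have Ctop: "C \<subseteq> topspace X" unfolding C_def theta_closure_def by auto
  define U where "U = (\<lambda>y. SOME B. openin X B \<and> y \<in> B \<and> x \<notin> X closure_of B)"
  have U: "openin X (U y) \<and> y \<in> U y \<and> x \<notin> X closure_of (U y)" if "y \<in> Y" for y
  proof -
    have "\<exists>B. openin X B \<and> y \<in> B \<and> x \<notin> X closure_of B"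
      using that unfolding Y_def C_def theta_closure_def by auto
    then show ?thesis unfolding U_def by (rule someI_ex)
  qed
  obtain A where AY: "A \<subseteq> Y" and disc: "discrete_subspace X A"
    and cov: "Y \<subseteq> X closure_of A \<union> \<Union>(U ` A)"
    using shapiro[of Y X U] U Y_def by blast
  define U1 where "U1 = (\<lambda>c. topspace X - {c}) ` (C - {x})"
  define U2 where "U2 = (\<lambda>B. topspace X - X closure_of B) ` {B. B \<subseteq> A \<and> x \<notin> X closure_of B}"
  define U3 where "U3 = (\<lambda>p. topspace X - X closure_of (U p)) ` A"
  define \<U> where "\<U> = U1 \<union> U2 \<union> U3"
  have op1: "\<forall>V\<in>U1. openin X V" unfolding U1_def
  proof
    fix V assume "V \<in> (\<lambda>c. topspace X - {c}) ` (C - {x})"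
    then obtain c where c: "c \<in> C" "V = topspace X - {c}" by blast
    have "closedin X {c}" using closedin_t1_singleton[OF assms(2)] c Ctop by blast
    then show "openin X V" using c by blast
  qed
  have op2: "\<forall>V\<in>U2. openin X V" unfolding U2_def by (blast intro: openin_diff openin_topspace closedin_closure_of)
  have op3: "\<forall>V\<in>U3. openin X V" unfolding U3_def by (blast intro: openin_diff openin_topspace closedin_closure_of)
  have op: "\<forall>V\<in>\<U>. openin X V" unfolding \<U>_def using op1 op2 op3 by blast
  have top: "topspace X \<in> \<U>"
  proof -
    have "topspace X \<in> U2" unfolding U2_def by (rule image_eqI[where x="{}"]) auto
    then show ?thesis unfolding \<U>_def by blast
  qed
  have int: "\<Inter>\<U> = {x}"
  proof
    have "x \<in> V" if "V \<in> \<U>" for V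
    proof -
      have "V \<in> U1 \<or> V \<in> U2 \<or> V \<in> U3" using that \<U>_def by blast
      then show ?thesis
      proof (elim disjE)
        assume "V \<in> U1" then show ?thesis using x unfolding U1_def by blast
      next
        assume "V \<in> U2" then show ?thesis using x unfolding U2_def by blast
      next
        assume "V \<in> U3"
        then obtain p where p: "p \<in> A" "V = topspace X - X closure_of (U p)" unfolding U3_def by blast
        have "p \<in> Y" using p AY by blast
        then show ?thesis using x p U by blast
      qed
    qed
    then show "{x} \<subseteq> \<Inter>\<U>" by blast
    show "\<Inter>\<U> \<subseteq> {x}"
    proof
      fix z assume z: "z \<in> \<Inter>\<U>"
      then have zt: "z \<in> topspace X" using top by blast
      show "z \<in> {x}"
      proof (rule ccontr)
        assume zx: "z \<notin> {x}"
        show False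
        proof (cases "z \<in> C")
          case True
          then have "topspace X - {z} \<in> U1" using zx unfolding U1_def by (intro image_eqI[where x=z]) auto
          then have "topspace X - {z} \<in> \<U>" unfolding \<U>_def by blast
          then show False using z by blast
        next
          case False
          then have zY: "z \<in> Y" using zt Y_def by auto
          then have "z \<in> X closure_of A \<union> \<Union>(U ` A)" using cov by blast
          then show False
          proof
            assume zc: "z \<in> X closure_of A"
            have "z \<in> U z \<inter> X closure_of A" using zc U[OF zY] by auto
            also have "\<dots> \<subseteq> X closure_of (U z \<inter> A)"
              by (rule openin_Int_closure_of_subset) (use U[OF zY] in auto)
            finally have z1: "z \<in> X closure_of (A \<inter> U z)" by (simp add: Int_commute)
            have "X closure_of (A \<inter> U z) \<subseteq> X closure_of (U z)" by (rule closure_of_mono) auto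
            then have "x \<notin> X closure_of (A \<inter> U z)" using U[OF zY] by blast
            then have "topspace X - X closure_of (A \<inter> U z) \<in> U2" unfolding U2_def
              by (intro image_eqI[where x="A \<inter> U z"]) auto
            then have "topspace X - X closure_of (A \<inter> U z) \<in> \<U>" unfolding \<U>_def by blast
            then show False using z z1 by blast
          next
            assume "z \<in> \<Union>(U ` A)"
            then obtain p where p: "p \<in> A" "z \<in> U p" by blast
            have pY: "p \<in> Y" using p AY by blast
            have "U p \<subseteq> X closure_of (U p)"
              by (rule closure_of_subset) (use U[OF pY] openin_subset in blast)
            moreover have "topspace X - X closure_of (U p) \<in> U3" using p(1) unfolding U3_def by (rule imageI)
            then have "topspace X - X closure_of (U p) \<in> \<U>" unfolding \<U>_def by blast
            ultimately show False using z p by blast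
          qed
        qed
      qed
    qed
  qed
  define K where "K = nu_s X *c (ctwo ^c spread X)"
  have cS: "Cinfinite (spread X)" unfolding spread_def by (rule Cinfinite_csum) (simp add: natLeq_Cinfinite)
  have cE: "Cinfinite (ctwo ^c spread X)" by (rule Cinfinite_cexp[OF ordLeq_refl[OF Card_order_ctwo] cS])
  have nz: "Cnotzero (nu_s X)"
    unfolding nu_s_def
    by (rule Cnotzero_mono[OF _ Card_order_csum ordLeq_csum1[OF Card_order_cone]])
       (simp add: Card_order_cone cone_not_czero)
  have cK: "Cinfinite K" unfolding K_def by (rule Cinfinite_cprod2[OF nz cE])
  have CK: "Card_order K" unfolding K_def by (rule Card_order_cprod)
  have infK: "\<not> finite (Field K)" using cK by (simp add: cinfinite_def)
  have nuK: "nu_s X \<le>o K"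
  proof -
    have "nu_s X \<le>o (ctwo ^c spread X) *c nu_s X"
      by (rule ordLeq_cprod2[OF Cinfinite_Cnotzero[OF cE]]) (simp add: nu_s_def Card_order_csum)
    then show ?thesis unfolding K_def by (rule ordLeq_ordIso_trans[OF _ cprod_com])
  qed
  have eK: "ctwo ^c spread X \<le>o K" unfolding K_def by (rule ordLeq_cprod2[OF nz Card_order_cexp])
  define N where "N = (SOME N. is_card_sup {theta_closure X {x} | x. x \<in> topspace X} N)"
  have N: "is_card_sup {theta_closure X {x} | x. x \<in> topspace X} N"
    unfolding N_def by (rule someI_ex[OF sup_ex])
  define S where "S = (SOME S. is_card_sup {D. discrete_subspace X D} S)"
  have S: "is_card_sup {D. discrete_subspace X D} S"
    unfolding S_def by (rule someI_ex[OF sup_ex])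
  have nuN: "nu_s X = cone +c |N|" unfolding nu_s_def N_def ..
  have spS: "spread X = |S| +c natLeq" unfolding spread_def S_def ..
  have K1: "|U1| \<le>o K"
  proof -
    have "|U1| \<le>o |C - {x}|" unfolding U1_def by (rule card_of_image)
    also have "|C - {x}| \<le>o |C|" by (rule card_of_mono1) auto
    also have "|C| \<le>o |N|"
    proof -
      have "C \<in> {theta_closure X {x} | x. x \<in> topspace X}" using x C_def by blast
      then show ?thesis using N unfolding is_card_sup_def by (rule_tac bspec) auto
    qed
    also have "|N| \<le>o nu_s X" unfolding nuN by (rule ordLeq_csum2[OF card_of_Card_order])
    also note nuK
    finally show ?thesis .
  qed
  have AS: "|A| \<le>o spread X"
  proof -
    have "A \<in> {D. discrete_subspace X D}" using disc by simp
    then have "|A| \<le>o |S|" using S unfolding is_card_sup_def by (rule_tac bspec) auto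
    also have "|S| \<le>o spread X" unfolding spS by (rule ordLeq_csum1[OF card_of_Card_order])
    finally show ?thesis .
  qed
  have PK: "|Pow A| \<le>o K"
  proof (cases "A = {}")
    case True then show ?thesis using fin_le_K[OF _ cK, of "Pow A"] by simp
  next
    case False
    have "|Pow A| =o ctwo ^c |A|" by (simp add: card_of_Pow_Func cexp_def ctwo_def Field_card_of)
    also have "ctwo ^c |A| \<le>o ctwo ^c spread X"
      by (rule cexp_mono2'[OF AS Card_order_ctwo]) (use False in \<open>simp add: Field_card_of\<close>)
    also note eK
    finally show ?thesis .
  qed
  have K2: "|U2| \<le>o K"
  proof -
    have "|U2| \<le>o |{B. B \<subseteq> A \<and> x \<notin> X closure_of B}|" unfolding U2_def by (rule card_of_image)
    also have "|{B. B \<subseteq> A \<and> x \<notin> X closure_of B}| \<le>o |Pow A|" by (rule card_of_mono1) auto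
    also note PK
    finally show ?thesis .
  qed
  have K3: "|U3| \<le>o K"
  proof -
    have "|U3| \<le>o |A|" unfolding U3_def by (rule card_of_image)
    also have "|A| \<le>o |Pow A|" by (rule ordLess_imp_ordLeq[OF card_of_Pow])
    also note PK
    finally show ?thesis .
  qed
  have K12: "|U1 \<union> U2| \<le>o K" by (rule card_of_Un_ordLeq_infinite_Field[OF infK K1 K2 CK])
  have "|\<U>| \<le>o K" unfolding \<U>_def by (rule card_of_Un_ordLeq_infinite_Field[OF infK K12 K3 CK])
  then have card: "|\<U>| \<le>o nu_s X *c (ctwo ^c spread X)" unfolding K_def .
  show "\<exists>\<U>. (\<forall>U\<in>\<U>. openin X U) \<and> \<Inter>\<U> = {x} \<and> |\<U>| \<le>o nu_s X *c (ctwo ^c spread X)"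
    by (rule exI[where x=\<U>]) (intro conjI op int card)
qed

end
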